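(* Let $q\geq 3$ be odd. The function $h\colon(0,1]\to\mathbb{C}$, $h(x)=1/x$, satisfies $\mathcal{P}_q h=h$, i.e. it is a real analytic eigenfunction of the Perron–Frobenius operator $\mathcal{P}_q$ with eigenvalue $1$.
   Context: Let $q\geq 3$ be odd and $\lambda=2\cos(\pi/q)$. Elements of $\mathrm{PGL}_2(\mathbb{R})$ act on $\mathbb{R}\cup\{\infty\}$ by $\begin{bmatrix}a&b\\c&d\end{bmatrix}.x=(ax+b)/(cx+d)$. Put $s(x)=\sin(x\pi/q)/\sin(\pi/q)$, $g_k=\begin{bmatrix}s(k)&-s(k+1)\\-s(k-1)&s(k)\end{bmatrix}$, $Q=\begin{bmatrix}0&1\\1&0\end{bmatrix}$, $K=\{(q+1)/2,\dots,q-1\}$. For $g\in\mathrm{PGL}_2(\mathbb{R})$ and a function $f$, set $\tau(g)f(x)=|(g^{-1})'(x)|\,f(g^{-1}.x)$, where $(g^{-1})'$ is the derivative of $x\mapsto g^{-1}.x$. The Perron–Frobenius operator is $\mathcal{P}_q=\sum_{k\in K}\big(\tau(g_k)+\tau(Qg_k)\big)$ (it is the transfer operator of the generalized Farey map with respect to Lebesgue measure). *)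

theory Defs
  imports "HOL-Analysis.Analysis"
begin

text \<open>Elements of PGL_2(R) are represented by a representative matrix
  [[a,b],[c,d]] written as the tuple (a,b,c,d).\<close>
type_synonym mat2 = "real \<times> real \<times> real \<times> real"

definition mat2_mult :: "mat2 \<Rightarrow> mat2 \<Rightarrow> mat2" where
  "mat2_mult M N = (case M of (a,b,c,d) \<Rightarrow> case N of (e,f,g,h) \<Rightarrow>
      (a*e + b*g, a*f + b*h, c*e + d*g, c*f + d*h))"

text \<open>Inverse in PGL_2: the adjugate represents the same projective class as the inverse.\<close>
definition pgl_inv :: "mat2 \<Rightarrow> mat2" where
  "pgl_inv M = (case M of (a,b,c,d) \<Rightarrow> (d, -b, -c, a))"

definition mob_act :: "mat2 \<Rightarrow> real \<Rightarrow> real" where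
  "mob_act M x = (case M of (a,b,c,d) \<Rightarrow> (a*x + b) / (c*x + d))"

definition s_fun :: "nat \<Rightarrow> real \<Rightarrow> real" where
  "s_fun q x = sin (x * pi / real q) / sin (pi / real q)"

definition g_mat :: "nat \<Rightarrow> nat \<Rightarrow> mat2" where
  "g_mat q k = (s_fun q (real k), - s_fun q (real k + 1), - s_fun q (real k - 1), s_fun q (real k))"

definition Q_mat :: mat2 where
  "Q_mat = (0, 1, 1, 0)"

definition K_set :: "nat \<Rightarrow> nat set" where
  "K_set q = {(q + 1) div 2 .. q - 1}"

definition tau :: "mat2 \<Rightarrow> (real \<Rightarrow> complex) \<Rightarrow> real \<Rightarrow> complex" where
  "tau g f x = complex_of_real \<bar>deriv (mob_act (pgl_inv g)) x\<bar> * f (mob_act (pgl_inv g) x)"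

definition PF_op :: "nat \<Rightarrow> (real \<Rightarrow> complex) \<Rightarrow> real \<Rightarrow> complex" where
  "PF_op q f x = (\<Sum>k\<in>K_set q. tau (g_mat q k) f x + tau (mat2_mult Q_mat (g_mat q k)) f x)"

end

theory Submission
  imports Defs
begin

lemma q_pos: "(q::nat) \<ge> 3 \<Longrightarrow> sin (pi / real q) > 0"
  by (rule sin_gt_zero) (auto simp: field_simps)

lemma s_sq:
  assumes "(q::nat) \<ge> 3"
  shows "s_fun q r ^ 2 - s_fun q (r+1) * s_fun q (r-1) = 1"
proof -
  define t where "t = pi / real q"
  define a where "a = r * pi / real q"
  have st: "sin t \<noteq> 0" using q_pos[OF assms] t_def by simp
  have e1: "(r+1) * pi / real q = a + t" and e2: "(r-1) * pi / real q = a - t"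
    by (simp_all add: a_def t_def add_divide_distrib diff_divide_distrib distrib_right left_diff_distrib)
  have "sin (a+t) * sin (a-t) = sin a ^2 - sin t ^2"
  proof -
    have "sin (a+t) * sin(a-t) = (sin a * cos t)^2 - (cos a * sin t)^2"
      by (simp add: sin_add sin_diff power2_eq_square algebra_simps)
    also have "\<dots> = sin a^2 * (1 - sin t^2) - (1 - sin a^2) * sin t^2"
      unfolding power_mult_distrib cos_squared_eq by simp
    finally show ?thesis by (simp add: algebra_simps)
  qed
  then show ?thesis using st
    unfolding s_fun_def e1 e2 a_def[symmetric] t_def[symmetric]
    by (simp add: field_simps power2_eq_square)
qed

lemma s_pos:
  assumes "0 < r" "r < real q" "q \<ge> 3"
  shows "s_fun q r > 0"
proof -
  have "sin (r * pi / real q) > 0" using assms by (intro sin_gt_zero) (auto simp: field_simps)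
  moreover have "sin (pi / real q) > 0" using assms
    by (intro sin_gt_zero) (auto simp: field_simps)
  ultimately show ?thesis unfolding s_fun_def by simp
qed

lemma s_q: "s_fun q (real q) = 0"
  unfolding s_fun_def by (cases "q = 0") auto

lemma s_sym:
  assumes "q = 2*m+1"
  shows "s_fun q (real m + 1) = s_fun q (real m)"
proof -
  have "(real m + 1) * pi / real q = pi - real m * pi / real q"
    using assms by (simp add: field_simps)
  then show ?thesis unfolding s_fun_def by simp
qed

lemma s_mono:
  assumes "q = 2*m+1" "real m \<le> r" "r \<le> 2 * real m" "q \<ge> 3"
  shows "s_fun q (r+1) \<le> s_fun q r"
proof -
  have qp: "real q > 0" using assms by simp
  have m1: "real m \<ge> 1" using assms by simp
  have st: "sin (pi / real q) > 0"
    by (intro sin_gt_zero) (use assms in \<open>auto simp: field_simps\<close>)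
  have "sin ((r+1) * pi / real q) - sin (r * pi / real q)
      = 2 * sin (pi / real q / 2) * cos ((2*r+1) * pi / real q / 2)"
  proof -
    have "((r+1) * pi / real q - r * pi / real q) / 2 = pi / real q / 2"
      "((r+1) * pi / real q + r * pi / real q) / 2 = (2*r+1) * pi / real q / 2"
      using qp by (simp_all add: field_simps)
    then show ?thesis unfolding sin_diff_sin by simp
  qed
  moreover have "sin (pi / real q / 2) > 0"
    by (intro sin_gt_zero) (use assms pi_gt_zero in \<open>auto simp: field_simps intro: add_pos_nonneg\<close>)
  moreover have "cos ((2*r+1) * pi / real q / 2) \<le> cos (pi/2)"
  proof (rule cos_monotone_0_pi_le)
    show "0 \<le> pi/2" by simp
    have "pi / 2 = (2 * real m + 1) * pi / real q / 2" using assms qp by (simp add: field_simps)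
    also have "\<dots> \<le> (2*r+1) * pi / real q / 2"
      using assms qp by (intro divide_right_mono mult_right_mono) auto
    finally show "pi/2 \<le> (2*r+1) * pi / real q / 2" .
    have "(2*r+1) * pi / real q / 2 \<le> (2 * real q) * pi / real q / 2"
      using assms qp by (intro divide_right_mono mult_right_mono) auto
    also have "\<dots> = pi" using qp by simp
    finally show "(2*r+1) * pi / real q / 2 \<le> pi" .
  qed
  ultimately have "sin ((r+1) * pi / real q) \<le> sin (r * pi / real q)"
    by (smt (verit) cos_pi_half mult_nonneg_nonpos)
  then show ?thesis unfolding s_fun_def using st by (simp add: divide_right_mono)
qed

lemma mob_eq: "mob_act (a,b,c,d) = (\<lambda>x. (a*x+b)/(c*x+d))"
  by (rule ext) (simp add: mob_act_def)

lemma mob_deriv: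
  assumes "c*x+d \<noteq> 0"
  shows "deriv (mob_act (a,b,c,d)) x = (a*d - b*c)/(c*x+d)^2"
  unfolding mob_eq
proof (rule DERIV_imp_deriv)
  show "((\<lambda>x. (a*x+b)/(c*x+d)) has_real_derivative (a*d - b*c)/(c*x+d)^2) (at x)"
  proof -
    have "((\<lambda>x. (a*x+b)/(c*x+d)) has_real_derivative
       ((a*1+0) * (c*x+d) - (a*x+b) * (c*1+0)) / ((c*x+d)*(c*x+d))) (at x)"
      by (intro DERIV_divide DERIV_add DERIV_cmult DERIV_ident DERIV_const assms)
    moreover have "((a*1+0) * (c*x+d) - (a*x+b) * (c*1+0)) / ((c*x+d)*(c*x+d))
        = (a*d - b*c)/(c*x+d)^2"
      by (simp add: power2_eq_square algebra_simps)
    ultimately show ?thesis by simp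
  qed
qed

lemma tau_eq:
  assumes "pgl_inv M = (a,b,c,d)" "c*x+d \<noteq> 0"
  shows "tau M f x = complex_of_real \<bar>(a*d - b*c)/(c*x+d)^2\<bar> * f ((a*x+b)/(c*x+d))"
  unfolding tau_def assms(1) mob_deriv[OF assms(2)] by (simp add: mob_act_def)

lemma telescope:
  "m \<le> n \<Longrightarrow> (\<Sum>k\<in>{Suc m..n}. f k - f (k - 1)) = f n - (f (m::nat) :: real)"
proof (induction n)
  case 0 then show ?case by simp
next
  case (Suc n)
  show ?case
  proof (cases "m = Suc n")
    case True then show ?thesis by simp
  next
    case False
    then have "m \<le> n" using Suc by simp
    then show ?thesis using Suc.IH by (simp add: atLeastAtMostSuc_conv)
  qed
qed

definition H :: "real \<Rightarrow> complex" where
  "H = (\<lambda>x::real. if 0 < x \<and> x \<le> 1 then complex_of_real (1 / x) else 0)"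

lemma part1:
  fixes A B C x :: real
  assumes "A > 0" "B > 0" "C \<ge> 0" "A \<ge> B" "B \<ge> C" "B*B - C*A = 1" "0 < x" "x \<le> 1"
  shows "complex_of_real \<bar>(B*B - C*A)/(A*x+B)^2\<bar> * H ((B*x+C)/(A*x+B))
       = complex_of_real (B/(B*x+C) - A/(A*x+B))"
proof -
  have p1: "A*x+B > 0" "B*x+C > 0" using assms by (auto intro: add_pos_nonneg)
  have "B*x+C \<le> A*x+B"
    using assms mult_right_mono[of B A x] by linarith
  then have y: "0 < (B*x+C)/(A*x+B)" "(B*x+C)/(A*x+B) \<le> 1" using p1 by auto
  have "B/(B*x+C) - A/(A*x+B) = (B*(A*x+B) - A*(B*x+C))/((B*x+C)*(A*x+B))"
    using p1 by (simp add: field_simps)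
  also have "B*(A*x+B) - A*(B*x+C) = 1" using assms(6) by (simp add: algebra_simps)
  finally have e: "B/(B*x+C) - A/(A*x+B) = 1/((B*x+C)*(A*x+B))" .
  have hy: "H ((B*x+C)/(A*x+B)) = complex_of_real ((A*x+B)/(B*x+C))"
    using y unfolding H_def by simp
  have r: "\<bar>(B*B - C*A)/(A*x+B)^2\<bar> * ((A*x+B)/(B*x+C)) = 1/((B*x+C)*(A*x+B))"
    unfolding assms(6) using p1 by (simp add: power2_eq_square)
  show ?thesis unfolding hy e of_real_mult[symmetric] r ..
qed

lemma part2:
  fixes A B C x :: real
  assumes "A > 0" "B > 0" "C \<ge> 0" "A \<ge> B" "B \<ge> C" "B*B - C*A = 1" "0 < x" "x \<le> 1"
  shows "complex_of_real \<bar>((-C)*(-A) - (-B)*(-B))/((-B)*x+(-A))^2\<bar> * H (((-C)*x+(-B))/((-B)*x+(-A)))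
       = complex_of_real (B/(B*x+A) - C/(C*x+B))"
proof -
  have p1: "B*x+A > 0" "C*x+B > 0" using assms by (auto intro: add_nonneg_pos)
  have "C*x+B \<le> B*x+A"
    using assms mult_right_mono[of C B x] by linarith
  then have y: "0 < (C*x+B)/(B*x+A)" "(C*x+B)/(B*x+A) \<le> 1" using p1 by auto
  have q: "((-C)*x+(-B))/((-B)*x+(-A)) = (C*x+B)/(B*x+A)"
  proof -
    have "(-C)*x+(-B) = -(C*x+B)" "(-B)*x+(-A) = -(B*x+A)" by simp_all
    then show ?thesis by (simp only: minus_divide_divide)
  qed
  have d: "\<bar>((-C)*(-A) - (-B)*(-B))/((-B)*x+(-A))^2\<bar> = 1/(B*x+A)^2"
  proof -
    have "(-C)*(-A) - (-B)*(-B) = -1" using assms(6) by simp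
    moreover have "((-B)*x+(-A))^2 = (B*x+A)^2" by (simp add: power2_eq_square algebra_simps)
    ultimately show ?thesis by simp
  qed
  have "B/(B*x+A) - C/(C*x+B) = (B*(C*x+B) - C*(B*x+A))/((B*x+A)*(C*x+B))"
    using p1 by (simp add: field_simps)
  also have "B*(C*x+B) - C*(B*x+A) = 1" using assms(6) by (simp add: algebra_simps)
  finally have e: "B/(B*x+A) - C/(C*x+B) = 1/((B*x+A)*(C*x+B))" .
  have hy: "H ((C*x+B)/(B*x+A)) = complex_of_real ((B*x+A)/(C*x+B))"
    using y unfolding H_def by simp
  have r: "1/(B*x+A)^2 * ((B*x+A)/(C*x+B)) = 1/((B*x+A)*(C*x+B))"
    using p1 by (simp add: power2_eq_square)
  show ?thesis unfolding q d hy e of_real_mult[symmetric] r ..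
qed

theorem proposition2p6:
  fixes q :: nat
  assumes "odd q" and "q \<ge> 3"
  defines "h \<equiv> (\<lambda>x::real. if 0 < x \<and> x \<le> 1 then complex_of_real (1 / x) else 0)"
  shows "\<forall>x\<in>{0<..1}. PF_op q h x = h x"
proof
  fix x :: real assume x: "x \<in> {0<..1}"
  then have x0: "0 < x" and x1: "x \<le> 1" by auto
  have hH: "h = H" unfolding h_def H_def ..
  define m where "m = q div 2"
  have qm: "q = 2*m+1" using assms(1) unfolding m_def by presburger
  have m1: "m \<ge> 1" using assms(2) qm by simp
  have K: "K_set q = {Suc m..2*m}" unfolding K_set_def qm by simp
  define S where "S = s_fun q"
  define F where "F j = S (real j) / (S (real j) * x + S (real j + 1))" for j :: nat
  define G where "G j = S (real j + 1) / (S (real j + 1) * x + S (real j))" for j :: nat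
  have tm: "tau (g_mat q k) h x + tau (mat2_mult Q_mat (g_mat q k)) h x
      = complex_of_real ((F k - F (k-1)) - (G k - G (k-1)))" if k: "k \<in> {Suc m..2*m}" for k
  proof -
    define A where "A = S (real k - 1)"
    define B where "B = S (real k)"
    define C where "C = S (real k + 1)"
    have k1: "k \<ge> 1" using k by simp
    have A0: "A > 0" unfolding A_def S_def using k m1 qm assms(2)
      by (intro s_pos) auto
    have B0: "B > 0" unfolding B_def S_def using k m1 qm assms(2)
      by (intro s_pos) auto
    have C0: "C \<ge> 0"
    proof (cases "real k + 1 < real q")
      case True then show ?thesis unfolding C_def S_def using assms(2)
        by (intro less_imp_le[OF s_pos]) auto
    next
      case False
      then have "real k + 1 = real q" using k qm by auto
      then show ?thesis unfolding C_def S_def using s_q by simp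
    qed
    have AB: "B \<le> A"
      using s_mono[OF qm, of "real k - 1"] k assms(2) unfolding A_def B_def S_def by auto
    have BC: "C \<le> B"
      using s_mono[OF qm, of "real k"] k assms(2) unfolding C_def B_def S_def by auto
    have det: "B*B - C*A = 1"
      using s_sq[OF assms(2), of "real k"] unfolding A_def B_def C_def S_def
      by (simp add: power2_eq_square)
    have i1: "pgl_inv (g_mat q k) = (B, C, A, B)"
      unfolding pgl_inv_def g_mat_def A_def B_def C_def S_def by simp
    have i2: "pgl_inv (mat2_mult Q_mat (g_mat q k)) = (-C, -B, -B, -A)"
      unfolding pgl_inv_def g_mat_def mat2_mult_def Q_mat_def A_def B_def C_def S_def by simp
    have "A*x > 0" "B*x > 0" using A0 B0 x0 by simp_all
    then have n1: "A*x+B \<noteq> 0" and n2: "(-B)*x+(-A) \<noteq> 0" using A0 B0 by auto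
    have t1: "tau (g_mat q k) h x = complex_of_real (B/(B*x+C) - A/(A*x+B))"
      unfolding tau_eq[OF i1 n1] hH using part1[OF A0 B0 C0 AB BC det x0 x1] .
    have t2: "tau (mat2_mult Q_mat (g_mat q k)) h x = complex_of_real (B/(B*x+A) - C/(C*x+B))"
      unfolding tau_eq[OF i2 n2] hH using part2[OF A0 B0 C0 AB BC det x0 x1] .
    have rk: "real (k-1) = real k - 1" "real k - 1 + 1 = real k" using k1 by auto
    have "F k = B/(B*x+C)" "F (k-1) = A/(A*x+B)" "G k = C/(C*x+B)" "G (k-1) = B/(B*x+A)"
      unfolding F_def G_def A_def B_def C_def rk by simp_all
    then show ?thesis unfolding t1 t2 by (simp flip: of_real_add) 
  qed
  have "PF_op q h x = (\<Sum>k\<in>{Suc m..2*m}. complex_of_real ((F k - F (k-1)) - (G k - G (k-1))))"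
    unfolding PF_op_def K using tm by (intro sum.cong) auto
  also have "\<dots> = complex_of_real ((\<Sum>k\<in>{Suc m..2*m}. F k - F (k-1)) - (\<Sum>k\<in>{Suc m..2*m}. G k - G (k-1)))"
    by (simp add: sum_subtractf)
  also have "\<dots> = complex_of_real ((F (2*m) - F m) - (G (2*m) - G m))"
    using telescope[of m "2*m" F] telescope[of m "2*m" G] by simp
  also have "(F (2*m) - F m) - (G (2*m) - G m) = 1/x"
  proof -
    have q2: "real (2*m) + 1 = real q" using qm by simp
    have Sq: "S (real q) = 0" unfolding S_def by (rule s_q)
    have S2: "S (real (2*m)) > 0" unfolding S_def using qm m1 assms(2) by (intro s_pos) auto
    have Sm: "S (real m) > 0" unfolding S_def using qm m1 assms(2) by (intro s_pos) auto
    have Sm1: "S (real m + 1) = S (real m)" unfolding S_def by (rule s_sym[OF qm])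
    have "F (2*m) = 1/x" unfolding F_def q2 Sq using S2 by simp
    moreover have "G (2*m) = 0" unfolding G_def q2 Sq by simp
    moreover have "F m = G m" unfolding F_def G_def Sm1 by simp
    ultimately show ?thesis by simp
  qed
  finally show "PF_op q h x = h x" unfolding h_def using x0 x1 by simp
qed

end
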